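(* For odd $n\ge5$, let $\bar P_n$ denote the maximum of $\bar P(\mathsf{M}^{(1)},\mathsf{M}^{(2)})$ over all pairs of dichotomic measurements on the regular $n$-gon state space $\mathcal{S}_n$, and let $r_{2n}^2=\sec(\pi/(2n))$. Then, for every integer $m\ge1$: (i) if $n=4m+1$, $\bar P_n=\frac14\big[2+\cos(m\pi/n)+\sec(\tfrac{\pi}{2n})\sin(m\pi/n)\big]$; (ii) if $n=4m+3$, $\bar P_n=\frac14\big[2+\cos((m+1)\pi/n)+\sec(\tfrac{\pi}{2n})\sin((m+1)\pi/n)\big]$.
   Context: The regular $n$-gon state space $\mathcal{S}_n\subset\mathbb{R}^3$ is the convex hull of $s_j=(r_n\cos(2j\pi/n),\,r_n\sin(2j\pi/n),\,1)^T$, $j=1,\ldots,n$, with $r_n=\sqrt{\sec(\pi/n)}$. Effects are linear functionals $e$ on $\mathbb{R}^3$ with $0\le e\le1$ on $\mathcal{S}_n$; unit effect $u=(0,0,1)$; $\|f\|=\max_{s\in\mathcal{S}_n}|f(s)|$. A dichotomic measurement is a pair of effects $\mathsf{M}_+,\mathsf{M}_-$ with $\mathsf{M}_++\mathsf{M}_-=u$, and $\bar P(\mathsf{M}^{(1)},\mathsf{M}^{(2)})=\frac18\sum_{x,y\in\{+,-\}}\|\mathsf{M}^{(1)}_x+\mathsf{M}^{(2)}_y\|$. *)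

theory Defs
  imports "HOL-Analysis.Analysis"
begin

text \<open>Linear functionals on R^3 are identified with vectors f :: real^3 via s \<mapsto> f \<bullet> s.\<close>

definition rn :: "nat \<Rightarrow> real" where
  "rn n = sqrt (1 / cos (pi / real n))"

definition vertex :: "nat \<Rightarrow> nat \<Rightarrow> real^3" where
  "vertex n j = vector [rn n * cos (2 * real j * pi / real n), rn n * sin (2 * real j * pi / real n), 1]"

definition ngon :: "nat \<Rightarrow> (real^3) set" where
  "ngon n = convex hull (vertex n ` {1..n})"

definition unit_eff :: "real^3" where
  "unit_eff = vector [0, 0, 1]"

definition is_effect :: "nat \<Rightarrow> real^3 \<Rightarrow> bool" where
  "is_effect n e \<longleftrightarrow> (\<forall>s\<in>ngon n. 0 \<le> e \<bullet> s \<and> e \<bullet> s \<le> 1)"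

definition gnorm :: "nat \<Rightarrow> real^3 \<Rightarrow> real" where
  "gnorm n f = (SUP s\<in>ngon n. \<bar>f \<bullet> s\<bar>)"

definition dichotomic :: "nat \<Rightarrow> (real^3) \<times> (real^3) \<Rightarrow> bool" where
  "dichotomic n M \<longleftrightarrow> is_effect n (fst M) \<and> is_effect n (snd M) \<and> fst M + snd M = unit_eff"

definition Pbar :: "nat \<Rightarrow> (real^3) \<times> (real^3) \<Rightarrow> (real^3) \<times> (real^3) \<Rightarrow> real" where
  "Pbar n M1 M2 =
     (1/8) * (gnorm n (fst M1 + fst M2) + gnorm n (fst M1 + snd M2)
            + gnorm n (snd M1 + fst M2) + gnorm n (snd M1 + snd M2))"

definition Pbar_values :: "nat \<Rightarrow> real set" where
  "Pbar_values n = {Pbar n M1 M2 | M1 M2. dichotomic n M1 \<and> dichotomic n M2}"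

end

theory Submission
  imports Defs
begin

lemma abs_cos_shift: "\<bar>cos (x + of_int q * pi)\<bar> = \<bar>cos x\<bar>"
proof -
  have s: "sin (of_int q * pi) = 0" using sin_npi_int[of q] by (simp add: mult.commute)
  have "(cos (of_int q * pi))^2 = 1" using sin_cos_squared_add[of "of_int q * pi"] s by simp
  then have "\<bar>cos (of_int q * pi)\<bar> = 1" by (auto simp: power2_eq_1_iff)
  then show ?thesis by (simp add: cos_add s abs_mult)
qed

lemma abs_sin_shift: "\<bar>sin (x + of_int q * pi)\<bar> = \<bar>sin x\<bar>"
proof -
  have s: "sin (of_int q * pi) = 0" using sin_npi_int[of q] by (simp add: mult.commute)
  have "(cos (of_int q * pi))^2 = 1" using sin_cos_squared_add[of "of_int q * pi"] s by simp
  then have "\<bar>cos (of_int q * pi)\<bar> = 1" by (auto simp: power2_eq_1_iff)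
  then show ?thesis by (simp add: sin_add s abs_mult)
qed

lemma f_diff:
  fixes c x y :: real
  shows "(cos x + sin x / c) - (cos y + sin y / c)
     = 2 * sin ((x - y)/2) * (cos ((x+y)/2) / c - sin ((x+y)/2))"
proof -
  have "cos x - cos y = 2 * sin ((x+y)/2) * sin ((y-x)/2)" by (rule cos_diff_cos)
  moreover have "sin x - sin y = 2 * sin ((x - y)/2) * cos ((x+y)/2)" by (rule sin_diff_sin)
  moreover have "sin ((y-x)/2) = - sin ((x-y)/2)" by (metis minus_diff_eq sin_minus minus_divide_left)
  ultimately have "(cos x - cos y) + (sin x - sin y) / c = 2 * sin ((x - y)/2) * (cos ((x+y)/2) / c - sin ((x+y)/2))"
    by (simp add: algebra_simps diff_divide_distrib)
  moreover have "(cos x + sin x / c) - (cos y + sin y / c) = (cos x - cos y) + (sin x - sin y) / c"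
    by (simp add: diff_divide_distrib)
  ultimately show ?thesis by simp
qed

lemma cos_le_c_sin:
  fixes x s :: real
  assumes x: "0 \<le> x" "x \<le> pi/4" and s: "pi/4 + x \<le> s" "s \<le> pi/2"
  shows "cos s \<le> cos (2*x) * sin s"
proof -
  define s0 where "s0 = pi/4 + x"
  define d where "d = s - s0"
  have d: "0 \<le> d" "d \<le> pi/4" using s x unfolding d_def s0_def by auto
  have cx: "cos x - sin x \<ge> 0"
  proof -
    have "sin x = cos (pi/2 - x)" by (simp add: cos_sin_eq)
    moreover have "cos (pi/2 - x) \<le> cos x" by (rule cos_monotone_0_pi_le) (use x in auto)
    ultimately show ?thesis by simp
  qed
  have sx: "sin x \<ge> 0" "cos x \<ge> 0" using x by (auto intro!: sin_ge_zero cos_ge_zero)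
  have c2: "cos (2*x) = (cos x - sin x) * (cos x + sin x)"
    by (subst cos_double) (simp add: power2_eq_square algebra_simps)
  have cs0: "cos s0 = (cos x - sin x) * (sqrt 2 / 2)" unfolding s0_def
    by (simp add: cos_add cos_45 sin_45 algebra_simps)
  have ss0: "sin s0 = (cos x + sin x) * (sqrt 2 / 2)" unfolding s0_def
    by (simp add: sin_add cos_45 sin_45 algebra_simps)
  have sq: "(cos x + sin x)^2 = 1 + 2 * sin x * cos x"
    using sin_cos_squared_add[of x] by (simp add: power2_eq_square algebra_simps)
  have key: "cos s0 \<le> cos (2*x) * sin s0"
  proof -
    have "cos (2*x) * sin s0 = (cos x - sin x) * (cos x + sin x)^2 * (sqrt 2 / 2)"
      unfolding c2 ss0 power2_eq_square by algebra
    then have "cos (2*x) * sin s0 = (cos x - sin x) * (1 + 2 * sin x * cos x) * (sqrt 2 / 2)"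
      unfolding sq .
    moreover have "(cos x - sin x) \<le> (cos x - sin x) * (1 + 2 * sin x * cos x)"
    proof -
      have "0 \<le> (cos x - sin x) * (2 * sin x * cos x)" using cx sx by simp
      then show ?thesis by (simp add: algebra_simps)
    qed
    ultimately show ?thesis using cs0 mult_right_mono[of "cos x - sin x" "(cos x - sin x) * (1 + 2 * sin x * cos x)" "sqrt 2 / 2"] by simp
  qed
  have s0r: "0 \<le> s0" "s0 \<le> pi/2" using x unfolding s0_def by auto
  have "sin s0 \<ge> 0" "cos s0 \<ge> 0" using s0r by (auto intro!: sin_ge_zero cos_ge_zero)
  moreover have "sin d \<ge> 0" "cos d \<ge> 0" using d by (auto intro!: sin_ge_zero cos_ge_zero)
  moreover have "cos (2*x) \<ge> 0" using x by (auto intro!: cos_ge_zero)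
  ultimately have A: "cos s0 * cos d \<le> cos (2*x) * sin s0 * cos d"
     and B: "- sin s0 * sin d \<le> cos (2*x) * cos s0 * sin d"
    using key by (auto intro: mult_right_mono order.trans[of _ 0] mult_nonneg_nonneg)
  have "s = s0 + d" unfolding d_def by simp
  then show ?thesis using A B by (simp add: cos_add sin_add algebra_simps)
qed

lemma sin_le_cos: "0 \<le> s \<Longrightarrow> s \<le> pi/4 \<Longrightarrow> sin s \<le> cos s"
proof -
  assume s0: "0 \<le> s" "s \<le> pi/4"
  have "sin s = cos (pi/2 - s)" by (simp add: cos_sin_eq)
  moreover have "cos (pi/2 - s) \<le> cos s" by (rule cos_monotone_0_pi_le) (use s0 in auto)
  ultimately show ?thesis by simp
qed

lemma scale_mono: "(x::real) \<le> y \<Longrightarrow> 0 < n \<Longrightarrow> x * pi / (2*n) \<le> y * pi / (2*n)"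
  by (intro divide_right_mono mult_right_mono) auto

lemma f_max:
  fixes i M n c :: real
  assumes n: "3 \<le> n" and c: "c = cos (pi / (2*n))"
    and i: "0 \<le> i" "i \<le> (n-1)/2" and iM: "i = M \<or> i \<le> M - 1 \<or> M + 1 \<le> i"
    and M: "4*M - 2 \<le> n" "n \<le> 4*M + 1"
  shows "cos (i*pi/n) + sin (i*pi/n) / c \<le> cos (M*pi/n) + sin (M*pi/n) / c"
proof -
  have np: "0 < n" using n by simp
  have e1: "\<And>x. x * pi / n = (2*x) * pi / (2*n)" by simp
  have pi4: "pi/4 = (n/2) * pi / (2*n)" using np by simp
  have pi2: "pi/2 = n * pi / (2*n)" using np by simp
  have pi4n: "pi/4 + pi/(4*n) = ((n+1)/2) * pi / (2*n)" using np by (simp add: field_simps)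
  have hpi: "pi / (2*n) = 1 * pi / (2*n)" by simp
  have cpos: "0 < c" "c \<le> 1" unfolding c
  proof -
    have "pi / (2*n) < pi/2" using n by (intro divide_strict_left_mono) auto
    moreover have "0 < pi / (2*n)" using np by simp
    ultimately show "0 < cos (pi / (2*n))" by (intro cos_gt_zero) auto
  qed simp
  define x where "x = i*pi/n"
  define y where "y = M*pi/n"
  have fd: "(cos x + sin x / c) - (cos y + sin y / c)
     = 2 * sin ((x - y)/2) * (cos ((x+y)/2) / c - sin ((x+y)/2))" by (rule f_diff)
  have hd: "(x - y)/2 = (i - M) * pi / (2*n)" unfolding x_def y_def using np by (simp add: field_simps)
  have hs: "(x + y)/2 = (i + M) * pi / (2*n)" unfolding x_def y_def using np by (simp add: field_simps)
  have "(cos x + sin x / c) - (cos y + sin y / c) \<le> 0"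
  proof (cases "i = M")
    case True then show ?thesis unfolding x_def y_def by simp
  next
    case False
    then consider "i \<le> M - 1" | "M + 1 \<le> i" using iM by auto
    then show ?thesis
    proof cases
      case 1
      let ?s = "(i + M) * pi / (2*n)"
      have s0: "0 \<le> ?s" "?s \<le> pi/4"
        using i 1 M np apply simp
        using scale_mono[of "i+M" "n/2" n] i 1 M np unfolding pi4[symmetric] by simp
      have sd: "sin ((x - y)/2) \<le> 0"
      proof -
        have "-(pi/2) \<le> (i - M) * pi / (2*n)"
          using scale_mono[of "-n" "i-M" n] i 1 M np unfolding pi2 by simp
        moreover have "(i - M) * pi / (2*n) \<le> 0"
          using i 1 M np by (simp add: divide_nonpos_pos mult_nonpos_nonneg)
        ultimately have "sin ((i - M) * pi / (2*n)) \<le> sin 0"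
          by (intro sin_monotone_2pi_le) auto
        then show ?thesis unfolding hd by simp
      qed
      have cs: "sin ?s \<le> cos ?s" using s0 by (rule sin_le_cos)
      have "0 \<le> cos ?s" using s0 pi_gt_zero by (intro cos_ge_zero) linarith+
      then have "cos ?s \<le> cos ?s / c" using cpos mult_left_mono[of c 1 "cos ?s"] by (simp add: le_divide_eq)
      then have "0 \<le> cos ((x+y)/2) / c - sin ((x+y)/2)" using cs unfolding hs by simp
      then show ?thesis using fd sd by (simp add: mult_nonpos_nonneg)
    next
      case 2
      let ?s = "(i + M) * pi / (2*n)"
      have s0: "pi/4 + pi/(4*n) \<le> ?s" "?s \<le> pi/2"
        using scale_mono[of "(n+1)/2" "i+M" n] scale_mono[of "i+M" n n] i 2 M np
        unfolding pi4n[symmetric] pi2[symmetric] by auto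
      have sd: "0 \<le> sin ((x - y)/2)"
      proof -
        have "0 \<le> (i - M) * pi / (2*n)" using i 2 np by simp
        moreover have "(i - M) * pi / (2*n) \<le> pi/2"
          using scale_mono[of "i-M" n n] i 2 M np unfolding pi2[symmetric] by simp
        ultimately show ?thesis unfolding hd using pi_gt_zero by (intro sin_ge_zero) linarith+
      qed
      have "cos ?s \<le> cos (2 * (pi/(4*n))) * sin ?s"
      proof (rule cos_le_c_sin)
        show "0 \<le> pi / (4 * n)" using np by simp
        show "pi / (4 * n) \<le> pi / 4" using n by (intro divide_left_mono) auto
      qed (use s0 in auto)
      moreover have "cos (2 * (pi/(4*n))) = c" unfolding c by (simp add: field_simps)
      ultimately have "cos ?s / c \<le> sin ?s" using cpos by (simp add: divide_le_eq mult.commute)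
      then have "cos ((x+y)/2) / c - sin ((x+y)/2) \<le> 0" unfolding hs by simp
      then show ?thesis using fd sd by (simp add: mult_nonneg_nonpos)
    qed
  qed
  then show ?thesis unfolding x_def y_def by simp
qed

lemma trig_small:
  fixes N :: nat and r M :: int and c :: real
  assumes n: "n = 2*N+1" "1 \<le> N" and c: "c = cos (pi / (2*real n))"
    and M: "4*M - 2 \<le> int n" "int n \<le> 4*M + 1"
    and r: "0 \<le> r" "r \<le> int n"
  shows "(even r \<longrightarrow> \<bar>cos (r*pi/(2*real n))\<bar> + \<bar>sin (r*pi/(2*real n))\<bar> / c \<le> cos (M*pi/n) + sin (M*pi/n) / c)
       \<and> (odd r \<longrightarrow> \<bar>cos (r*pi/(2*real n))\<bar> / c + \<bar>sin (r*pi/(2*real n))\<bar> \<le> cos (M*pi/n) + sin (M*pi/n) / c)"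
proof -
  have np: "0 < real n" using n by simp
  have nN: "int n = 2*int N + 1" using n by simp
  let ?t = "r*pi/(2*real n)"
  have t: "0 \<le> ?t" "?t \<le> pi/2"
    using r np scale_mono[of r n n] by (auto simp: field_simps)
  have cs: "0 \<le> cos ?t" "0 \<le> sin ?t" using t pi_gt_zero
    by (intro cos_ge_zero sin_ge_zero; linarith)+
  have fm: "cos (real_of_int i*pi/n) + sin (real_of_int i*pi/n) / c \<le> cos (M*pi/n) + sin (M*pi/n) / c"
    if "0 \<le> i" "i \<le> int N" for i :: int
  proof (rule f_max)
    show "3 \<le> real n" using n by simp
    show "c = cos (pi / (2 * real n))" by (rule c)
    show "0 \<le> real_of_int i" using that by simp
    show "real_of_int i \<le> (real n - 1) / 2" using that n by simp
    show "real_of_int i = real_of_int M \<or> real_of_int i \<le> real_of_int M - 1 \<or> real_of_int M + 1 \<le> real_of_int i"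
    proof -
      have "i = M \<or> i \<le> M - 1 \<or> M + 1 \<le> i" by linarith
      then show ?thesis
      proof (elim disjE)
        assume "i \<le> M - 1" then have "real_of_int i \<le> real_of_int (M - 1)" by (simp only: of_int_le_iff)
        then show ?thesis by simp
      next
        assume "M + 1 \<le> i" then have "real_of_int (M+1) \<le> real_of_int i" by (simp only: of_int_le_iff)
        then show ?thesis by simp
      qed simp
    qed
    show "4 * real_of_int M - 2 \<le> real n" using M by linarith
    show "real n \<le> 4 * real_of_int M + 1" using M by linarith
  qed
  show ?thesis
  proof (intro conjI impI)
        assume "even r"
    then obtain i where i: "r = 2*i" by (auto elim: evenE)
    have ti: "?t = real_of_int i * pi / n" using i np by simp
    have "0 \<le> i" "i \<le> int N" using i r nN by linarith+
    then have "cos (real_of_int i*pi/n) + sin (real_of_int i*pi/n) / c \<le> cos (M*pi/n) + sin (M*pi/n) / c"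
      by (rule fm)
    then show "\<bar>cos ?t\<bar> + \<bar>sin ?t\<bar> / c \<le> cos (M*pi/n) + sin (M*pi/n) / c"
      using cs unfolding ti by simp
  next
    assume "odd r"
    then obtain i where i: "r = 2*i + 1" by (auto elim: oddE)
    have e: "pi/2 - ?t = real_of_int (int N - i) * pi / n" using i np n by (simp add: field_simps)
    have "cos ?t = sin (pi/2 - ?t)" using cos_sin_eq[of ?t] by simp
    moreover have "sin ?t = cos (pi/2 - ?t)" using sin_cos_eq[of ?t] by simp
    ultimately
    have "\<bar>cos ?t\<bar> / c + \<bar>sin ?t\<bar> = cos (real_of_int (int N - i) * pi / n) + sin (real_of_int (int N - i) * pi / n) / c"
      using cs unfolding e by simp
    also have "\<dots> \<le> cos (M*pi/n) + sin (M*pi/n) / c"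
    proof (rule fm)
      show "0 \<le> int N - i" "int N - i \<le> int N" using i r nN by linarith+
    qed
    finally show "\<bar>cos ?t\<bar> / c + \<bar>sin ?t\<bar> \<le> cos (M*pi/n) + sin (M*pi/n) / c" .
  qed
qed

lemma trig_bound:
  fixes N :: nat and j M :: int and c :: real
  assumes n: "n = 2*N+1" "1 \<le> N" and c: "c = cos (pi / (2*real n))"
    and M: "4*M - 2 \<le> int n" "int n \<le> 4*M + 1"
  shows "(even j \<longrightarrow> \<bar>cos (j*pi/(2*real n))\<bar> + \<bar>sin (j*pi/(2*real n))\<bar> / c \<le> cos (M*pi/n) + sin (M*pi/n) / c)
       \<and> (odd j \<longrightarrow> \<bar>cos (j*pi/(2*real n))\<bar> / c + \<bar>sin (j*pi/(2*real n))\<bar> \<le> cos (M*pi/n) + sin (M*pi/n) / c)"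
proof -
  have np: "0 < real n" using n by simp
  define r where "r = j mod (2*int n)"
  define q where "q = j div (2*int n)"
  have jr: "j = 2*int n*q + r" unfolding r_def q_def by simp
  have r0: "0 \<le> r" "r < 2*int n" unfolding r_def using np by auto
  have par: "even j \<longleftrightarrow> even r" using jr by simp
  have sh: "j*pi/(2*real n) = r*pi/(2*real n) + of_int q * pi" using jr np by (simp add: field_simps)
  have ac: "\<bar>cos (j*pi/(2*real n))\<bar> = \<bar>cos (r*pi/(2*real n))\<bar>" "\<bar>sin (j*pi/(2*real n))\<bar> = \<bar>sin (r*pi/(2*real n))\<bar>"
    unfolding sh by (rule abs_cos_shift abs_sin_shift)+
  show ?thesis
  proof (cases "r \<le> int n")
    case True
    then show ?thesis using trig_small[OF n c M, of r] r0 par ac by simp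
  next
    case False
    define r' where "r' = 2*int n - r"
    have r': "0 \<le> r'" "r' \<le> int n" using False r0 unfolding r'_def by auto
    have par': "even r \<longleftrightarrow> even r'" unfolding r'_def by simp
    have e: "r*pi/(2*real n) = pi - r'*pi/(2*real n)" unfolding r'_def using np by (simp add: field_simps)
    have ac': "\<bar>cos (r*pi/(2*real n))\<bar> = \<bar>cos (r'*pi/(2*real n))\<bar>" "\<bar>sin (r*pi/(2*real n))\<bar> = \<bar>sin (r'*pi/(2*real n))\<bar>"
      unfolding e by simp_all
    show ?thesis using trig_small[OF n c M, of r'] r' par par' ac ac' by simp
  qed
qed

definition DD :: "real \<Rightarrow> real \<Rightarrow> real \<Rightarrow> real" where
  "DD x1 x2 g = x1 * cos g + x2 * sin g"

lemma step1:
  fixes i j :: int and n :: nat and x1 x2 :: real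
  assumes "0 < n"
  shows "x1 * (cos (2*real_of_int i*pi/real n) - cos (2*real_of_int j*pi/real n)) + x2 * (sin (2*real_of_int i*pi/real n) - sin (2*real_of_int j*pi/real n))
     = 2 * sin (real_of_int (i-j)*pi/n) * DD x1 x2 ((2*(real_of_int i + real_of_int j) + real n)*pi/(2*real n))"
proof -
  have np: "0 < real n" using assms by simp
  let ?a = "2*real_of_int i*pi/real n" and ?b = "2*real_of_int j*pi/real n"
  have e1: "(?a + ?b)/2 = (i+j)*pi/n" and e2: "(?b - ?a)/2 = - ((i-j)*pi/n)" and e3: "(?a - ?b)/2 = (i-j)*pi/n"
    using np by (simp_all add: field_simps)
  have e4: "(2*(real_of_int i + real_of_int j) + real n)*pi/(2*real n) = (i+j)*pi/n + pi/2" using np by (simp add: field_simps)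
  show ?thesis
    unfolding cos_diff_cos sin_diff_sin e1 e2 e3 e4 DD_def
    by (simp add: cos_add sin_add algebra_simps)
qed

lemma sin_N:
  fixes N :: nat
  assumes "n = 2*N+1"
  shows "sin (real N * pi / n) = cos (pi/(2*real n))" "sin (real (N+1) * pi / n) = cos (pi/(2*real n))"
proof -
  have np: "0 < real n" using assms by simp
  have "real N * pi / n = pi/2 - pi/(2*real n)" using np assms by (simp add: field_simps)
  then show "sin (real N * pi / n) = cos (pi/(2*real n))" by (simp add: sin_cos_eq)
  have "real (N+1) * pi / n = pi/2 + pi/(2*real n)" using np assms by (simp add: field_simps)
  then show "sin (real (N+1) * pi / n) = cos (pi/(2*real n))" by (simp add: sin_cos_eq)
qed

definition Hyp :: "nat \<Rightarrow> real \<Rightarrow> real \<Rightarrow> bool" where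
  "Hyp n x1 x2 \<longleftrightarrow> (\<forall>i j :: int. \<bar>x1 * (cos (2*real_of_int i*pi/real n) - cos (2*real_of_int j*pi/real n)) + x2 * (sin (2*real_of_int i*pi/real n) - sin (2*real_of_int j*pi/real n))\<bar> \<le> 1)"

lemma step2:
  fixes N :: nat and g :: int and x1 x2 :: real
  assumes n: "n = 2*N+1" and H: "Hyp n x1 x2" and g: "odd g"
  shows "\<bar>DD x1 x2 (g*pi/(2*real n))\<bar> * (2 * cos (pi/(2*real n))) \<le> 1"
proof -
  obtain h where h: "g = 2*h+1" using g by (auto elim: oddE)
  have np: "0 < n" using n by simp
  define e where "e = h - int N"
  define d where "d = (if even (e - int N) then int N else int N + 1)"
  have "even (e - d)" unfolding d_def by auto
  then obtain k where k: "e - d = 2*k" by (metis evenE)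
  have sd: "sin (real_of_int d * pi / n) = cos (pi/(2*real n))"
    using sin_N[OF n] unfolding d_def by (auto simp: add.commute)
  have s1: "x1 * (cos (2*real_of_int (k+d)*pi/n) - cos (2*real_of_int k*pi/n)) + x2 * (sin (2*real_of_int (k+d)*pi/n) - sin (2*real_of_int k*pi/n))
     = 2 * sin (real_of_int ((k+d)-k)*pi/n) * DD x1 x2 ((2*(real_of_int (k+d) + real_of_int k) + real n)*pi/(2*real n))"
    by (rule step1[OF np])
  have e1: "real_of_int ((k+d)-k) = real_of_int d" by simp
  have "2*((k+d)+k) + int n = g" using k h n unfolding e_def by simp
  then have e2: "(2*(real_of_int (k+d) + real_of_int k) + real n) = real_of_int g"
    by (metis of_int_add of_int_mult of_int_of_nat_eq of_int_numeral)
  have eq: "x1 * (cos (2*real_of_int (k+d)*pi/n) - cos (2*real_of_int k*pi/n)) + x2 * (sin (2*real_of_int (k+d)*pi/n) - sin (2*real_of_int k*pi/n))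
     = 2 * cos (pi/(2*real n)) * DD x1 x2 (g*pi/(2*real n))"
    using s1 unfolding e1 e2 sd .
  have c0: "0 \<le> cos (pi/(2*real n))" using n by (intro cos_ge_zero) (auto simp: field_simps)
  have "\<bar>2 * cos (pi/(2*real n)) * DD x1 x2 (g*pi/(2*real n))\<bar> \<le> 1"
    using H[unfolded Hyp_def, rule_format, of "k+d" k] unfolding eq .
  then show ?thesis using c0 by (simp add: abs_mult mult.commute)
qed

lemma sin_int_le:
  fixes N :: nat and d :: int
  assumes n: "n = 2*N+1"
  shows "\<bar>sin (real_of_int d * pi / n)\<bar> \<le> cos (pi/(2*real n))"
proof -
  have np: "0 < real n" using n by simp
  have nN: "int n = 2*int N + 1" using n by simp
  define r where "r = d mod int n"
  define q where "q = d div int n"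
  have dr: "d = int n * q + r" unfolding r_def q_def by simp
  have r0: "0 \<le> r" "r < int n" unfolding r_def using np by auto
  have sh: "real_of_int d * pi / n = real_of_int r * pi / n + real_of_int q * pi"
    using np unfolding dr by (simp add: field_simps)
  have a: "\<bar>sin (real_of_int d * pi / n)\<bar> = \<bar>sin (real_of_int r * pi / n)\<bar>"
    unfolding sh by (rule abs_sin_shift)
  have small: "\<bar>sin (real_of_int r' * pi / n)\<bar> \<le> cos (pi/(2*real n))" if r': "0 \<le> r'" "r' \<le> int N" for r' :: int
  proof -
    have le: "real_of_int r' * pi / n \<le> real N * pi / n"
      using r' np by (intro divide_right_mono mult_right_mono) auto
    have ge: "0 \<le> real_of_int r' * pi / n" using r' np by simp
    have Nle: "real N * pi / n \<le> pi/2"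
    proof -
      have "real N * pi / n = pi/2 - pi/(2*real n)" using np n by (simp add: field_simps)
      moreover have "0 \<le> pi/(2*real n)" using np by simp
      ultimately show ?thesis by linarith
    qed
    have "sin (real_of_int r' * pi / n) \<le> sin (real N * pi / n)"
      using le ge Nle pi_gt_zero by (intro sin_monotone_2pi_le) linarith+
    moreover have "0 \<le> sin (real_of_int r' * pi / n)" using ge le Nle pi_gt_zero by (intro sin_ge_zero) linarith+
    ultimately show ?thesis using sin_N(1)[OF n] by simp
  qed
  show ?thesis
  proof (cases "r \<le> int N")
    case True then show ?thesis using a small[of r] r0 by simp
  next
    case False
    have e: "real_of_int r * pi / n = pi - real_of_int (int n - r) * pi / n" using np by (simp add: field_simps)
    have "\<bar>sin (real_of_int r * pi / n)\<bar> = \<bar>sin (real_of_int (int n - r) * pi / n)\<bar>"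
      unfolding e by simp
    moreover have "\<bar>sin (real_of_int (int n - r) * pi / n)\<bar> \<le> cos (pi/(2*real n))"
      using False r0 nN by (intro small) linarith+
    ultimately show ?thesis using a by simp
  qed
qed

lemma cpos:
  assumes "n = 2*N+1" "1 \<le> N"
  shows "0 < cos (pi/(2*real n))" "cos (pi/(2*real n)) \<le> 1"
proof -
  have np: "3 \<le> real n" using assms by simp
  have "pi/(2*real n) \<le> pi/2" using np by (intro divide_left_mono) auto
  moreover have "pi/(2*real n) < pi/2" using np by (intro divide_strict_left_mono) auto
  moreover have "0 < pi/(2*real n)" using np by simp
  ultimately show "0 < cos (pi/(2*real n))" by (intro cos_gt_zero) auto
qed simp

lemma step3:
  fixes N :: nat and k :: int and x1 x2 :: real
  assumes n: "n = 2*N+1" "1 \<le> N" and H: "Hyp n x1 x2"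
  shows "\<bar>DD x1 x2 (real_of_int k*pi/n)\<bar> * (2 * (cos (pi/(2*real n)))^2) \<le> 1"
proof -
  let ?c = "cos (pi/(2*real n))"
  let ?h = "pi/(2*real n)"
  have np: "0 < real n" using n by simp
  have c: "0 < ?c" using cpos[OF n] by simp
  have a1: "real_of_int k*pi/n - ?h = real_of_int (2*k-1) * pi / (2*real n)" using np by (simp add: field_simps)
  have a2: "real_of_int k*pi/n + ?h = real_of_int (2*k+1) * pi / (2*real n)" using np by (simp add: field_simps)
  have id: "DD x1 x2 (real_of_int k*pi/n) * (2 * ?c) = DD x1 x2 (real_of_int k*pi/n - ?h) + DD x1 x2 (real_of_int k*pi/n + ?h)"
    unfolding DD_def by (simp add: cos_add cos_diff sin_add sin_diff algebra_simps)
  have b1: "\<bar>DD x1 x2 (real_of_int (2*k-1) * pi / (2*real n))\<bar> * (2 * ?c) \<le> 1"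
    by (rule step2[OF n(1) H]) simp
  have b2: "\<bar>DD x1 x2 (real_of_int (2*k+1) * pi / (2*real n))\<bar> * (2 * ?c) \<le> 1"
    by (rule step2[OF n(1) H]) simp
  have "\<bar>DD x1 x2 (real_of_int k*pi/n)\<bar> * (2 * ?c) * (2 * ?c)
      = \<bar>DD x1 x2 (real_of_int k*pi/n) * (2 * ?c)\<bar> * (2 * ?c)" using c by (simp add: abs_mult)
  also have "\<dots> \<le> (\<bar>DD x1 x2 (real_of_int k*pi/n - ?h)\<bar> + \<bar>DD x1 x2 (real_of_int k*pi/n + ?h)\<bar>) * (2 * ?c)"
    unfolding id using c by (intro mult_right_mono abs_triangle_ineq) auto
  also have "\<dots> \<le> 2" unfolding a1 a2 using b1 b2 by (simp add: algebra_simps)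
  finally show ?thesis by (simp add: power2_eq_square algebra_simps)
qed

lemma bnd:
  fixes N :: nat and g :: int and x1 x2 :: real
  assumes n: "n = 2*N+1" "1 \<le> N" and H: "Hyp n x1 x2"
  shows "\<bar>DD x1 x2 (real_of_int g*pi/(2*real n))\<bar> \<le> (if odd g then 1 / (2 * cos (pi/(2*real n))) else 1 / (2 * (cos (pi/(2*real n)))^2))"
proof -
  have c: "0 < cos (pi/(2*real n))" using cpos[OF n] by simp
  have np: "0 < real n" using n by simp
  show ?thesis
  proof (cases "odd g")
    case True
    then show ?thesis using step2[OF n(1) H True] c by (simp add: le_divide_eq)
  next
    case False
    then obtain k where k: "g = 2*k" by (auto elim: evenE)
    have "real_of_int g*pi/(2*real n) = real_of_int k * pi / n" using k np by simp
    then show ?thesis using step3[OF n H, of k] c False by (simp add: le_divide_eq)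
  qed
qed

lemma absD:
  fixes g :: int and n :: nat
  assumes np: "0 < n"
  shows "\<exists>g'. (odd g' \<longleftrightarrow> odd g) \<and> \<bar>DD x1 x2 (real_of_int g*pi/(2*real n))\<bar> = DD x1 x2 (real_of_int g'*pi/(2*real n))"
proof (cases "DD x1 x2 (real_of_int g*pi/(2*real n)) \<ge> 0")
  case True then show ?thesis by (intro exI[of _ g]) simp
next
  case False
  have e: "real_of_int (g + 2*int n)*pi/(2*real n) = real_of_int g*pi/(2*real n) + pi" using np by (simp add: field_simps)
  have "DD x1 x2 (real_of_int (g + 2*int n)*pi/(2*real n)) = - DD x1 x2 (real_of_int g*pi/(2*real n))"
    unfolding e DD_def by simp
  then show ?thesis using False by (intro exI[of _ "g + 2*int n"]) simp
qed

lemma sumdiff: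
  fixes p1 p2 q1 q2 a b :: real
  shows "DD (p1+q1) (p2+q2) a + DD (p1-q1) (p2-q2) b
       = 2 * cos ((a-b)/2) * DD p1 p2 ((a+b)/2) + 2 * sin ((a-b)/2) * DD q1 q2 ((a+b)/2 + pi/2)"
proof -
  have L: "DD (p1+q1) (p2+q2) a + DD (p1-q1) (p2-q2) b
      = p1*(cos a + cos b) + p2*(sin a + sin b) + q1*(cos a - cos b) + q2*(sin a - sin b)"
    unfolding DD_def by (simp add: algebra_simps)
  have m: "sin ((b-a)/2) = - sin ((a-b)/2)" by (metis minus_diff_eq sin_minus minus_divide_left)
  show ?thesis
    unfolding L cos_plus_cos sin_plus_sin cos_diff_cos sin_diff_sin m
    unfolding DD_def by (simp add: cos_add sin_add algebra_simps)
qed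

lemma core:
  fixes N :: nat and M i j k l :: int and p1 p2 q1 q2 :: real
  assumes n: "n = 2*N+1" "1 \<le> N" and Hp: "Hyp n p1 p2" and Hq: "Hyp n q1 q2"
    and M: "4*M - 2 \<le> int n" "int n \<le> 4*M + 1"
  shows "(p1+q1) * (cos (2*real_of_int i*pi/real n) - cos (2*real_of_int j*pi/real n)) + (p2+q2) * (sin (2*real_of_int i*pi/real n) - sin (2*real_of_int j*pi/real n))
       + ((p1-q1) * (cos (2*real_of_int k*pi/real n) - cos (2*real_of_int l*pi/real n)) + (p2-q2) * (sin (2*real_of_int k*pi/real n) - sin (2*real_of_int l*pi/real n)))
       \<le> 2 * (cos (M*pi/n) + sin (M*pi/n) / cos (pi/(2*real n)))"
proof -
  define c where "c = cos (pi/(2*real n))"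
  have c: "0 < c" "c \<le> 1" using cpos[OF n] unfolding c_def by auto
  have np: "0 < n" using n by simp
  have rnp: "0 < real n" using n by simp
  define g1 where "g1 = 2*(i+j) + int n"
  define g2 where "g2 = 2*(k+l) + int n"
  have g1o: "odd g1" "odd g2" unfolding g1_def g2_def using n by simp_all
  have eg1: "(2*(real_of_int i + real_of_int j) + real n) = real_of_int g1" unfolding g1_def by simp
  have eg2: "(2*(real_of_int k + real_of_int l) + real n) = real_of_int g2" unfolding g2_def by simp
  let ?G = "\<lambda>g::int. real_of_int g * pi / (2*real n)"
  have s1: "(p1+q1) * (cos (2*real_of_int i*pi/real n) - cos (2*real_of_int j*pi/real n)) + (p2+q2) * (sin (2*real_of_int i*pi/real n) - sin (2*real_of_int j*pi/real n))
     = 2 * sin (real_of_int (i-j)*pi/n) * DD (p1+q1) (p2+q2) (?G g1)"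
    using step1[OF np, where i=i and j=j] unfolding eg1 .
  have s2: "(p1-q1) * (cos (2*real_of_int k*pi/real n) - cos (2*real_of_int l*pi/real n)) + (p2-q2) * (sin (2*real_of_int k*pi/real n) - sin (2*real_of_int l*pi/real n))
     = 2 * sin (real_of_int (k-l)*pi/n) * DD (p1-q1) (p2-q2) (?G g2)"
    using step1[OF np, where i=k and j=l] unfolding eg2 .
  have t1: "2 * sin (real_of_int (i-j)*pi/n) * DD (p1+q1) (p2+q2) (?G g1) \<le> 2 * c * \<bar>DD (p1+q1) (p2+q2) (?G g1)\<bar>"
  proof -
    have "2 * sin (real_of_int (i-j)*pi/n) * DD (p1+q1) (p2+q2) (?G g1) \<le> 2 * \<bar>sin (real_of_int (i-j)*pi/n)\<bar> * \<bar>DD (p1+q1) (p2+q2) (?G g1)\<bar>"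
      by (simp add: abs_mult[symmetric] mult.assoc)
    also have "\<dots> \<le> 2 * c * \<bar>DD (p1+q1) (p2+q2) (?G g1)\<bar>"
      using sin_int_le[OF n(1), of "i-j"] unfolding c_def by (intro mult_right_mono) auto
    finally show ?thesis .
  qed
  have t2: "2 * sin (real_of_int (k-l)*pi/n) * DD (p1-q1) (p2-q2) (?G g2) \<le> 2 * c * \<bar>DD (p1-q1) (p2-q2) (?G g2)\<bar>"
  proof -
    have "2 * sin (real_of_int (k-l)*pi/n) * DD (p1-q1) (p2-q2) (?G g2) \<le> 2 * \<bar>sin (real_of_int (k-l)*pi/n)\<bar> * \<bar>DD (p1-q1) (p2-q2) (?G g2)\<bar>"
      by (simp add: abs_mult[symmetric] mult.assoc)
    also have "\<dots> \<le> 2 * c * \<bar>DD (p1-q1) (p2-q2) (?G g2)\<bar>"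
      using sin_int_le[OF n(1), of "k-l"] unfolding c_def by (intro mult_right_mono) auto
    finally show ?thesis .
  qed
  obtain g1' where g1': "odd g1'" "\<bar>DD (p1+q1) (p2+q2) (?G g1)\<bar> = DD (p1+q1) (p2+q2) (?G g1')"
    using absD[OF np, where g=g1] g1o by auto
  obtain g2' where g2': "odd g2'" "\<bar>DD (p1-q1) (p2-q2) (?G g2)\<bar> = DD (p1-q1) (p2-q2) (?G g2')"
    using absD[OF np, where g=g2] g1o by auto
  obtain h1 where h1: "g1' = 2*h1+1" using g1' by (auto elim: oddE)
  obtain h2 where h2: "g2' = 2*h2+1" using g2' by (auto elim: oddE)
  define jj where "jj = h1 - h2"
  define hh where "hh = h1 + h2 + 1"
  have ea: "(?G g1' - ?G g2')/2 = real_of_int jj * pi / (2*real n)"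
    unfolding jj_def h1 h2 using rnp by (simp add: field_simps)
  have eb: "(?G g1' + ?G g2')/2 = ?G hh"
    unfolding hh_def h1 h2 using rnp by (simp add: field_simps)
  have ec: "?G hh + pi/2 = ?G (hh + int n)"
    using rnp by (simp add: field_simps)
  have SD: "DD (p1+q1) (p2+q2) (?G g1') + DD (p1-q1) (p2-q2) (?G g2')
     = 2 * cos (real_of_int jj * pi / (2*real n)) * DD p1 p2 (?G hh) + 2 * sin (real_of_int jj * pi / (2*real n)) * DD q1 q2 (?G (hh + int n))"
    using sumdiff[of p1 q1 p2 q2 "?G g1'" "?G g2'"] unfolding ea eb ec .
  let ?cj = "\<bar>cos (real_of_int jj * pi / (2*real n))\<bar>"
  let ?sj = "\<bar>sin (real_of_int jj * pi / (2*real n))\<bar>"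
  have SD2: "DD (p1+q1) (p2+q2) (?G g1') + DD (p1-q1) (p2-q2) (?G g2')
     \<le> 2 * ?cj * \<bar>DD p1 p2 (?G hh)\<bar> + 2 * ?sj * \<bar>DD q1 q2 (?G (hh + int n))\<bar>"
    unfolding SD by (intro add_mono) (simp_all add: abs_mult[symmetric] mult.assoc)
  have Bp: "\<bar>DD p1 p2 (?G hh)\<bar> \<le> (if odd hh then 1 / (2 * c) else 1 / (2 * c^2))"
    using bnd[OF n Hp, of hh] unfolding c_def .
  have Bq: "\<bar>DD q1 q2 (?G (hh + int n))\<bar> \<le> (if odd (hh + int n) then 1 / (2 * c) else 1 / (2 * c^2))"
    using bnd[OF n Hq, of "hh + int n"] unfolding c_def .
  have par: "odd (hh + jj)" unfolding hh_def jj_def by presburger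
  have nodd: "odd (int n)" using n by simp
  have TB: "(even jj \<longrightarrow> ?cj + ?sj / c \<le> cos (M*pi/n) + sin (M*pi/n) / c)
       \<and> (odd jj \<longrightarrow> ?cj / c + ?sj \<le> cos (M*pi/n) + sin (M*pi/n) / c)"
    using trig_bound[OF n _ M, where j=jj and c=c] unfolding c_def by simp
  have main: "2 * c * (2 * ?cj * \<bar>DD p1 p2 (?G hh)\<bar> + 2 * ?sj * \<bar>DD q1 q2 (?G (hh + int n))\<bar>)
      \<le> 2 * (cos (M*pi/n) + sin (M*pi/n) / c)"
  proof (cases "even jj")
    case True
    then have o1: "odd hh" and o2: "even (hh + int n)" using par nodd by presburger+
    have "2 * ?cj * \<bar>DD p1 p2 (?G hh)\<bar> \<le> 2 * ?cj * (1 / (2*c))"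
      using Bp o1 by (intro mult_left_mono) auto
    moreover have "2 * ?sj * \<bar>DD q1 q2 (?G (hh + int n))\<bar> \<le> 2 * ?sj * (1 / (2*c^2))"
      using Bq o2 by (intro mult_left_mono) auto
    ultimately have "2 * c * (2 * ?cj * \<bar>DD p1 p2 (?G hh)\<bar> + 2 * ?sj * \<bar>DD q1 q2 (?G (hh + int n))\<bar>)
       \<le> 2 * c * (2 * ?cj * (1 / (2*c)) + 2 * ?sj * (1 / (2*c^2)))"
      using c by (intro mult_left_mono[OF add_mono]) auto
    also have "\<dots> = 2 * (?cj + ?sj / c)" using c by (simp add: field_simps power2_eq_square)
    also have "\<dots> \<le> 2 * (cos (M*pi/n) + sin (M*pi/n) / c)" using TB True by simp
    finally show ?thesis .
  next
    case False
    then have o1: "even hh" and o2: "odd (hh + int n)" using par nodd by presburger+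
    have "2 * ?cj * \<bar>DD p1 p2 (?G hh)\<bar> \<le> 2 * ?cj * (1 / (2*c^2))"
      using Bp o1 by (intro mult_left_mono) auto
    moreover have "2 * ?sj * \<bar>DD q1 q2 (?G (hh + int n))\<bar> \<le> 2 * ?sj * (1 / (2*c))"
      using Bq o2 by (intro mult_left_mono) auto
    ultimately have "2 * c * (2 * ?cj * \<bar>DD p1 p2 (?G hh)\<bar> + 2 * ?sj * \<bar>DD q1 q2 (?G (hh + int n))\<bar>)
       \<le> 2 * c * (2 * ?cj * (1 / (2*c^2)) + 2 * ?sj * (1 / (2*c)))"
      using c by (intro mult_left_mono[OF add_mono]) auto
    also have "\<dots> = 2 * (?cj / c + ?sj)" using c by (simp add: field_simps power2_eq_square)
    also have "\<dots> \<le> 2 * (cos (M*pi/n) + sin (M*pi/n) / c)" using TB False by simp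
    finally show ?thesis .
  qed
  have "(p1+q1) * (cos (2*real_of_int i*pi/real n) - cos (2*real_of_int j*pi/real n)) + (p2+q2) * (sin (2*real_of_int i*pi/real n) - sin (2*real_of_int j*pi/real n))
       + ((p1-q1) * (cos (2*real_of_int k*pi/real n) - cos (2*real_of_int l*pi/real n)) + (p2-q2) * (sin (2*real_of_int k*pi/real n) - sin (2*real_of_int l*pi/real n)))
      \<le> 2 * c * \<bar>DD (p1+q1) (p2+q2) (?G g1)\<bar> + 2 * c * \<bar>DD (p1-q1) (p2-q2) (?G g2)\<bar>"
    unfolding s1 s2 using t1 t2 by (rule add_mono)
  also have "\<dots> = 2 * c * (DD (p1+q1) (p2+q2) (?G g1') + DD (p1-q1) (p2-q2) (?G g2'))"
    unfolding g1'(2) g2'(2) by (simp add: algebra_simps)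
  also have "\<dots> \<le> 2 * c * (2 * ?cj * \<bar>DD p1 p2 (?G hh)\<bar> + 2 * ?sj * \<bar>DD q1 q2 (?G (hh + int n))\<bar>)"
    using SD2 c by (intro mult_left_mono) auto
  also have "\<dots> \<le> 2 * (cos (M*pi/n) + sin (M*pi/n) / c)" by (rule main)
  finally show ?thesis unfolding c_def .
qed

lemma inner_vertex:
  "f \<bullet> vertex n j = f$3 + rn n * (f$1 * cos (2*real j*pi/real n) + f$2 * sin (2*real j*pi/real n))"
  unfolding vertex_def inner_vec_def sum_3 by (simp add: algebra_simps)

lemma unit_inner: "unit_eff \<bullet> vertex n j = 1"
  unfolding unit_eff_def vertex_def inner_vec_def sum_3 by simp

lemma rn_pos: assumes "3 \<le> n" shows "0 < rn n"
proof -
  have "pi / real n < pi/2" using assms by (intro divide_strict_left_mono) auto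
  moreover have "0 < pi / real n" using assms by simp
  ultimately have "0 < cos (pi / real n)" by (intro cos_gt_zero) auto
  then show ?thesis unfolding rn_def by simp
qed

definition vl :: "nat \<Rightarrow> real^3 \<Rightarrow> int \<Rightarrow> real" where
  "vl n f j = f$3 + rn n * (f$1 * cos (2*real_of_int j*pi/real n) + f$2 * sin (2*real_of_int j*pi/real n))"

lemma period:
  fixes j :: int assumes n: "0 < n"
  shows "\<exists>k\<in>{1..n}. cos (2*real_of_int j*pi/real n) = cos (2*real k*pi/real n) \<and> sin (2*real_of_int j*pi/real n) = sin (2*real k*pi/real n)"
proof -
  define r where "r = j mod int n"
  define q where "q = j div int n"
  have jr: "j = int n * q + r" unfolding r_def q_def by simp
  have r0: "0 \<le> r" "r < int n" unfolding r_def using n by auto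
  have rnp: "0 < real n" using n by simp
  have sh: "2*real_of_int j*pi/real n = 2*real_of_int r*pi/real n + (2*pi) * real_of_int q"
    using rnp unfolding jr by (simp add: field_simps)
  have cs: "cos (2*real_of_int j*pi/real n) = cos (2*real_of_int r*pi/real n)"
       "sin (2*real_of_int j*pi/real n) = sin (2*real_of_int r*pi/real n)"
    unfolding sh by (simp_all add: cos_add sin_add)
  show ?thesis
  proof (cases "r = 0")
    case True
    have c1: "cos (2*real_of_int j*pi/real n) = 1 \<and> sin (2*real_of_int j*pi/real n) = 0"
      unfolding cs True by simp
    have e: "2*real n*pi/real n = 2*pi" using rnp by simp
    have c2: "cos (2*real n*pi/real n) = 1 \<and> sin (2*real n*pi/real n) = 0" unfolding e by simp
    have "n \<in> {1..n}" using n by simp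
    moreover have "cos (2*real_of_int j*pi/real n) = cos (2*real n*pi/real n) \<and> sin (2*real_of_int j*pi/real n) = sin (2*real n*pi/real n)"
      by (simp only: c1 c2 simp_thms)
    ultimately show ?thesis by blast
  next
    case False
    then have "nat r \<in> {1..n}" using r0 by auto
    moreover have "real (nat r) = real_of_int r" using r0 by simp
    ultimately show ?thesis unfolding cs by metis
  qed
qed

lemma vl_vertex:
  assumes "0 < n"
  shows "\<exists>k\<in>{1..n}. f \<bullet> vertex n k = vl n f j"
  using period[OF assms, of j] unfolding inner_vertex vl_def by auto

lemma hull_sub:
  assumes "\<forall>j\<in>{1..n}. a \<le> f \<bullet> vertex n j \<and> f \<bullet> vertex n j \<le> b"
  shows "ngon n \<subseteq> {s. a \<le> f \<bullet> s \<and> f \<bullet> s \<le> b}"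
proof -
  have cv: "convex {s. a \<le> f \<bullet> s \<and> f \<bullet> s \<le> b}"
  proof -
    have "{s. a \<le> f \<bullet> s \<and> f \<bullet> s \<le> b} = {s. f \<bullet> s \<ge> a} \<inter> {s. f \<bullet> s \<le> b}" by auto
    then show ?thesis using convex_halfspace_ge[of a f] convex_halfspace_le[of f b] by (simp add: convex_Int)
  qed
  show ?thesis unfolding ngon_def
    by (rule hull_minimal) (use assms cv in auto)
qed

lemma vertex_in: "j \<in> {1..n} \<Longrightarrow> vertex n j \<in> ngon n"
  unfolding ngon_def by (rule hull_inc) auto

lemma is_effect_iff:
  "is_effect n e \<longleftrightarrow> (\<forall>j\<in>{1..n}. 0 \<le> e \<bullet> vertex n j \<and> e \<bullet> vertex n j \<le> 1)"
proof
  assume "is_effect n e" then show "\<forall>j\<in>{1..n}. 0 \<le> e \<bullet> vertex n j \<and> e \<bullet> vertex n j \<le> 1"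
    unfolding is_effect_def using vertex_in by blast
next
  assume "\<forall>j\<in>{1..n}. 0 \<le> e \<bullet> vertex n j \<and> e \<bullet> vertex n j \<le> 1"
  from hull_sub[OF this] show "is_effect n e" unfolding is_effect_def by auto
qed

lemma gn_le:
  assumes n: "0 < n" and B: "\<forall>j\<in>{1..n}. \<bar>f \<bullet> vertex n j\<bar> \<le> B"
  shows "gnorm n f \<le> B"
proof -
  have "\<forall>j\<in>{1..n}. -B \<le> f \<bullet> vertex n j \<and> f \<bullet> vertex n j \<le> B" using B by (auto simp: abs_le_iff)
  from hull_sub[OF this] have sub: "\<And>s. s \<in> ngon n \<Longrightarrow> \<bar>f \<bullet> s\<bar> \<le> B" by (auto simp: abs_le_iff)
  have ne: "ngon n \<noteq> {}" using vertex_in[of 1 n] n by auto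
  show ?thesis unfolding gnorm_def by (rule cSUP_least[OF ne]) (rule sub)
qed

lemma gn_bdd: "0 < n \<Longrightarrow> bdd_above ((\<lambda>s. \<bar>f \<bullet> s\<bar>) ` ngon n)"
proof -
  assume n: "0 < n"
  define B where "B = (\<Sum>j\<in>{1..n}. \<bar>f \<bullet> vertex n j\<bar>)"
  have "\<forall>j\<in>{1..n}. \<bar>f \<bullet> vertex n j\<bar> \<le> B"
    unfolding B_def by (auto intro: member_le_sum)
  then have "\<forall>j\<in>{1..n}. -B \<le> f \<bullet> vertex n j \<and> f \<bullet> vertex n j \<le> B" by (auto simp: abs_le_iff)
  from hull_sub[OF this] have "\<And>s. s \<in> ngon n \<Longrightarrow> \<bar>f \<bullet> s\<bar> \<le> B" by (auto simp: abs_le_iff)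
  then show ?thesis by (intro bdd_aboveI2) auto
qed

lemma gn_ge:
  assumes "j \<in> {1..n}"
  shows "\<bar>f \<bullet> vertex n j\<bar> \<le> gnorm n f"
proof -
  have n: "0 < n" using assms by auto
  show ?thesis unfolding gnorm_def
    by (rule cSUP_upper[OF vertex_in[OF assms] gn_bdd[OF n]])
qed

lemma gn_attained:
  assumes n: "0 < n"
  shows "\<exists>i\<in>{1..n}. gnorm n f = \<bar>f \<bullet> vertex n i\<bar>"
proof -
  let ?S = "(\<lambda>j. \<bar>f \<bullet> vertex n j\<bar>) ` {1..n}"
  have fin: "finite ?S" by simp
  have ne: "?S \<noteq> {}" using n by simp
  from Max_in[OF fin ne] obtain i where i: "i \<in> {1..n}" "Max ?S = \<bar>f \<bullet> vertex n i\<bar>" by blast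
  have "\<forall>j\<in>{1..n}. \<bar>f \<bullet> vertex n j\<bar> \<le> Max ?S" by (intro ballI Max_ge[OF fin] imageI)
  then have "gnorm n f \<le> Max ?S" by (rule gn_le[OF n])
  then have le: "gnorm n f \<le> \<bar>f \<bullet> vertex n i\<bar>" using i(2) by simp
  have ge: "\<bar>f \<bullet> vertex n i\<bar> \<le> gnorm n f" by (rule gn_ge[OF i(1)])
  have "gnorm n f = \<bar>f \<bullet> vertex n i\<bar>" using le ge by (rule antisym)
  then show ?thesis using i(1) by blast
qed

lemma vl_ge:
  assumes n: "0 < n" shows "vl n f j \<le> gnorm n f"
proof -
  obtain k where k: "k \<in> {1..n}" "f \<bullet> vertex n k = vl n f j" using vl_vertex[OF n, of f j] by blast
  have "\<bar>f \<bullet> vertex n k\<bar> \<le> gnorm n f" by (rule gn_ge[OF k(1)])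
  then show ?thesis using k(2) by simp
qed

lemma vl_add: "vl n (f + g) j = vl n f j + vl n g j"
  unfolding vl_def by (simp add: algebra_simps)
lemma vl_diff: "vl n (f - g) j = vl n f j - vl n g j"
  unfolding vl_def by (simp add: algebra_simps)
lemma vl_unit: "vl n unit_eff j = 1"
  unfolding vl_def unit_eff_def by simp

lemma eff_vl:
  assumes e: "is_effect n f" and n: "0 < n"
  shows "0 \<le> vl n f j \<and> vl n f j \<le> 1"
proof -
  obtain k where k: "k \<in> {1..n}" "f \<bullet> vertex n k = vl n f j" using vl_vertex[OF n, of f j] by blast
  show ?thesis using e k unfolding is_effect_iff by metis
qed

lemma eff_hyp:
  assumes e: "is_effect n f" and n: "0 < n"
  shows "Hyp n (rn n * f$1) (rn n * f$2)"
  unfolding Hyp_def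
proof (intro allI)
  fix i j :: int
  have "vl n f i - vl n f j = rn n * f$1 * (cos (2*real_of_int i*pi/real n) - cos (2*real_of_int j*pi/real n)) + rn n * f$2 * (sin (2*real_of_int i*pi/real n) - sin (2*real_of_int j*pi/real n))"
    unfolding vl_def by (simp add: algebra_simps)
  moreover have "\<bar>vl n f i - vl n f j\<bar> \<le> 1" using eff_vl[OF e n, of i] eff_vl[OF e n, of j] by linarith
  ultimately show "\<bar>rn n * f$1 * (cos (2*real_of_int i*pi/real n) - cos (2*real_of_int j*pi/real n)) + rn n * f$2 * (sin (2*real_of_int i*pi/real n) - sin (2*real_of_int j*pi/real n))\<bar> \<le> 1"
    by simp
qed

lemma vl_nat: "f \<bullet> vertex n k = vl n f (int k)"
  unfolding inner_vertex vl_def by simp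

lemma upper:
  fixes N :: nat and M :: int
  assumes n: "n = 2*N+1" "1 \<le> N" and M: "4*M - 2 \<le> int n" "int n \<le> 4*M + 1"
    and a: "is_effect n a" and b: "is_effect n b"
  shows "Pbar n (a, unit_eff - a) (b, unit_eff - b) \<le> (2 + cos (M*pi/n) + (1 / cos (pi/(2*real n))) * sin (M*pi/n)) / 4"
proof -
  have np: "0 < n" using n by simp
  let ?u = unit_eff
  obtain i where i: "i \<in> {1..n}" "gnorm n (a + b) = \<bar>(a + b) \<bullet> vertex n i\<bar>" using gn_attained[OF np] by blast
  obtain k where k: "k \<in> {1..n}" "gnorm n (a + (?u - b)) = \<bar>(a + (?u - b)) \<bullet> vertex n k\<bar>" using gn_attained[OF np] by blast
  obtain l where l: "l \<in> {1..n}" "gnorm n ((?u - a) + b) = \<bar>((?u - a) + b) \<bullet> vertex n l\<bar>" using gn_attained[OF np] by blast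
  obtain j where j: "j \<in> {1..n}" "gnorm n ((?u - a) + (?u - b)) = \<bar>((?u - a) + (?u - b)) \<bullet> vertex n j\<bar>" using gn_attained[OF np] by blast
  let ?A = "\<lambda>x. vl n a x" and ?B = "\<lambda>x. vl n b x"
  have ea: "\<And>x. 0 \<le> ?A x \<and> ?A x \<le> 1" using eff_vl[OF a np] by blast
  have eb: "\<And>x. 0 \<le> ?B x \<and> ?B x \<le> 1" using eff_vl[OF b np] by blast
  have g1: "gnorm n (a + b) = ?A (int i) + ?B (int i)"
    unfolding i(2) vl_nat vl_add using ea[of "int i"] eb[of "int i"] by simp
  have g2: "gnorm n (a + (?u - b)) = 1 + ?A (int k) - ?B (int k)"
    unfolding k(2) vl_nat vl_add vl_diff vl_unit using ea[of "int k"] eb[of "int k"] by simp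
  have g3: "gnorm n ((?u - a) + b) = 1 - ?A (int l) + ?B (int l)"
    unfolding l(2) vl_nat vl_add vl_diff vl_unit using ea[of "int l"] eb[of "int l"] by simp
  have g4: "gnorm n ((?u - a) + (?u - b)) = 2 - ?A (int j) - ?B (int j)"
    unfolding j(2) vl_nat vl_add vl_diff vl_unit using ea[of "int j"] eb[of "int j"] by simp
  define p1 where "p1 = rn n * a$1"
  define p2 where "p2 = rn n * a$2"
  define q1 where "q1 = rn n * b$1"
  define q2 where "q2 = rn n * b$2"
  have Hp: "Hyp n p1 p2" unfolding p1_def p2_def by (rule eff_hyp[OF a np])
  have Hq: "Hyp n q1 q2" unfolding q1_def q2_def by (rule eff_hyp[OF b np])
  let ?C = "\<lambda>x::int. cos (2*real_of_int x*pi/real n)" and ?S = "\<lambda>x::int. sin (2*real_of_int x*pi/real n)"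
  have key: "(?A (int i) + ?B (int i)) - (?A (int j) + ?B (int j)) + ((?A (int k) - ?B (int k)) - (?A (int l) - ?B (int l)))
     = (p1+q1) * (?C (int i) - ?C (int j)) + (p2+q2) * (?S (int i) - ?S (int j))
       + ((p1-q1) * (?C (int k) - ?C (int l)) + (p2-q2) * (?S (int k) - ?S (int l)))"
    unfolding vl_def p1_def p2_def q1_def q2_def by (simp add: algebra_simps)
  have "(p1+q1) * (?C (int i) - ?C (int j)) + (p2+q2) * (?S (int i) - ?S (int j))
       + ((p1-q1) * (?C (int k) - ?C (int l)) + (p2-q2) * (?S (int k) - ?S (int l)))
     \<le> 2 * (cos (M*pi/n) + sin (M*pi/n) / cos (pi/(2*real n)))"
    by (rule core[OF n Hp Hq M])
  then have K: "(?A (int i) + ?B (int i)) - (?A (int j) + ?B (int j)) + ((?A (int k) - ?B (int k)) - (?A (int l) - ?B (int l)))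
     \<le> 2 * (cos (M*pi/n) + sin (M*pi/n) / cos (pi/(2*real n)))" unfolding key .
  have P: "Pbar n (a, ?u - a) (b, ?u - b) = (1/8) * (gnorm n (a + b) + gnorm n (a + (?u - b)) + gnorm n ((?u - a) + b) + gnorm n ((?u - a) + (?u - b)))"
    unfolding Pbar_def by simp
  show ?thesis unfolding P g1 g2 g3 g4 using K by (simp add: field_simps)
qed

lemma cos_int_ge:
  fixes N :: nat and d :: int
  assumes n: "n = 2*N+1" "1 \<le> N"
  shows "- cos (pi / real n) \<le> cos (2*real_of_int d*pi/real n)"
proof -
  have rnp: "0 < real n" using n by simp
  have np: "0 < n" using n by simp
  obtain k where k: "k \<in> {1..n}" "cos (2*real_of_int d*pi/real n) = cos (2*real k*pi/real n)"
    using period[OF np, of d] by blast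
  have small: "- cos (pi / real n) \<le> cos (2*real r*pi/real n)" if r: "r \<le> N" for r :: nat
  proof -
    have "2*real r*pi/real n \<le> 2*real N*pi/real n"
      using r rnp by (intro divide_right_mono mult_right_mono) auto
    also have "2*real N*pi/real n = pi - pi / real n" using rnp n by (simp add: field_simps)
    finally have le: "2*real r*pi/real n \<le> pi - pi / real n" .
    have "0 \<le> 2*real r*pi/real n" by simp
    moreover have "pi - pi / real n \<le> pi" using rnp by simp
    ultimately have "cos (pi - pi / real n) \<le> cos (2*real r*pi/real n)"
      using le by (intro cos_monotone_0_pi_le) auto
    then show ?thesis by simp
  qed
  show ?thesis
  proof (cases "k \<le> N")
    case True then show ?thesis using small k by simp
  next
    case False
    then have kk: "n - k \<le> N" "k \<le> n" using n k by auto
    have e: "2*real k*pi/real n = 2*pi - 2*real (n-k)*pi/real n" using rnp kk(2) by (simp add: field_simps of_nat_diff)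
    have "cos (2*real k*pi/real n) = cos (2*real (n-k)*pi/real n)"
      unfolding e by (simp add: cos_diff)
    then show ?thesis using small[OF kk(1)] k by simp
  qed
qed

lemma cos_idx:
  fixes N :: nat and s :: int
  assumes n: "n = 2*N+1" "1 \<le> N"
  shows "\<exists>i1 i2 :: int. cos (real_of_int (2*i1 - s)*pi/real n) - cos (real_of_int (2*i2 - s)*pi/real n) = 1 + cos (pi / real n)"
proof -
  have rnp: "0 < real n" using n by simp
  show ?thesis
  proof (cases "even s")
    case True
    then obtain t where t: "s = 2*t" by (auto elim: evenE)
    have e1: "real_of_int (2*t - s)*pi/real n = 0" using t by simp
    have e2: "real_of_int (2*(t + int N + 1) - s)*pi/real n = pi + pi / real n"
      using t rnp n by (simp add: field_simps)
    show ?thesis by (intro exI[of _ t] exI[of _ "t + int N + 1"]) (simp only: e1 e2, simp)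
  next
    case False
    then obtain t where t: "s = 2*t+1" by (auto elim: oddE)
    have e1: "real_of_int (2*(t+1) - s)*pi/real n = pi / real n" using t by simp
    have e2: "real_of_int (2*(t + int N + 1) - s)*pi/real n = pi"
      using t rnp n by (simp add: field_simps)
    show ?thesis by (intro exI[of _ "t+1"] exI[of _ "t + int N + 1"]) (simp only: e1 e2, simp)
  qed
qed

lemma sin_idx:
  fixes N :: nat and s :: int
  assumes n: "n = 2*N+1" "1 \<le> N"
  shows "\<exists>k1 k2 :: int. sin (real_of_int (2*k2 - s)*pi/real n) - sin (real_of_int (2*k1 - s)*pi/real n) = 2 * cos (pi/(2*real n))"
proof -
  define e where "e = (if even (s - int N) then int N else int N + 1)"
  have se: "sin (real_of_int e * pi / n) = cos (pi/(2*real n))"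
    using sin_N[OF n(1)] unfolding e_def by (auto simp: add.commute)
  have "even (s + e)" "even (s - e)" unfolding e_def by auto
  then obtain k2 k1 where k: "s + e = 2*k2" "s - e = 2*k1" by (metis evenE)
  have e2: "real_of_int (2*k2 - s) * pi / real n = real_of_int e * pi / n" using k by simp
  have e1: "real_of_int (2*k1 - s) * pi / real n = - (real_of_int e * pi / n)"
  proof -
    have "2*k1 - s = - e" using k by simp
    then show ?thesis by simp
  qed
  have A: "sin (real_of_int (2*k2 - s)*pi/real n) = cos (pi/(2*real n))" unfolding e2 by (rule se)
  have B: "sin (real_of_int (2*k1 - s)*pi/real n) = - cos (pi/(2*real n))" unfolding e1 sin_minus se ..
  show ?thesis using A B by (intro exI[of _ k1] exI[of _ k2]) simp
qed

lemma eff_of: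
  assumes "\<And>j::int. 0 \<le> vl n f j \<and> vl n f j \<le> 1"
  shows "is_effect n f"
  unfolding is_effect_iff vl_nat using assms by blast

lemma achieve:
  fixes N :: nat and M :: int
  assumes n: "n = 2*N+1" "1 \<le> N" and M: "4*M - 2 \<le> int n" "int n \<le> 4*M + 1"
  shows "(2 + cos (M*pi/n) + (1 / cos (pi/(2*real n))) * sin (M*pi/n)) / 4 \<in> Pbar_values n"
proof -
  let ?u = unit_eff
  have np: "0 < n" using n by simp
  have rnp: "0 < real n" using n by simp
  define r where "r = rn n"
  have r: "0 < r" unfolding r_def using n by (intro rn_pos) simp
  define C1 where "C1 = cos (pi / real n)"
  define c where "c = cos (pi/(2*real n))"
  have c: "0 < c" "c \<le> 1" using cpos[OF n] unfolding c_def by auto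
  have C1c: "1 + C1 = 2 * c^2"
  proof -
    have "pi / real n = 2 * (pi/(2*real n))" by simp
    then have "C1 = cos (2 * (pi/(2*real n)))" unfolding C1_def by simp
    then show ?thesis unfolding c_def cos_double_cos by simp
  qed
  have C1p: "0 < 1 + C1" using C1c c by simp
  define D where "D = r * (1 + C1)"
  have D: "0 < D" unfolding D_def using r C1p by simp
  define ts where "ts = 2*real_of_int M*pi/real n"
  define a :: "real^3" where "a = vector [1/D, 0, C1/(1+C1)]"
  define b :: "real^3" where "b = vector [cos ts/D, sin ts/D, C1/(1+C1)]"
  have rDx: "r * (x / D) = x / (1+C1)" for x
  proof -
    have "r * (x / D) = (r * x) / (r * (1+C1))" unfolding D_def by simp
    also have "\<dots> = x / (1+C1)" using r by (intro mult_divide_mult_cancel_left) simp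
    finally show ?thesis .
  qed
  have VA: "vl n a j = (cos (2*real_of_int j*pi/real n) + C1)/(1+C1)" for j
  proof -
    have "vl n a j = C1/(1+C1) + r * (cos (2*real_of_int j*pi/real n) / D)"
      unfolding vl_def a_def r_def by simp
    then show ?thesis unfolding rDx by (simp add: add_divide_distrib)
  qed
  have VB: "vl n b j = (cos (2*real_of_int (j - M)*pi/real n) + C1)/(1+C1)" for j
  proof -
    have e: "2*real_of_int (j - M)*pi/real n = 2*real_of_int j*pi/real n - ts"
      unfolding ts_def using rnp by (simp add: field_simps)
    have "vl n b j = C1/(1+C1) + r * ((cos ts * cos (2*real_of_int j*pi/real n) + sin ts * sin (2*real_of_int j*pi/real n)) / D)"
      unfolding vl_def b_def r_def by (simp add: algebra_simps add_divide_distrib)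
    then show ?thesis unfolding rDx e cos_diff by (simp add: add_divide_distrib algebra_simps)
  qed
  have cb: "0 \<le> (x + C1)/(1+C1) \<and> (x + C1)/(1+C1) \<le> 1" if "- C1 \<le> x" "x \<le> 1" for x
    using that C1p by (simp add: field_simps)
  have ea: "is_effect n a"
    by (rule eff_of) (unfold VA, rule cb, unfold C1_def, rule cos_int_ge[OF n], simp)
  have eb: "is_effect n b"
    by (rule eff_of) (unfold VB, rule cb, unfold C1_def, rule cos_int_ge[OF n], simp)
  have eua: "is_effect n (?u - a)"
    by (rule eff_of) (unfold vl_diff vl_unit, use eff_vl[OF ea np] in auto)
  have eub: "is_effect n (?u - b)"
    by (rule eff_of) (unfold vl_diff vl_unit, use eff_vl[OF eb np] in auto)
  have d1: "dichotomic n (a, ?u - a)" unfolding dichotomic_def using ea eua by simp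
  have d2: "dichotomic n (b, ?u - b)" unfolding dichotomic_def using eb eub by simp
  define v where "v = (2 + cos (M*pi/n) + (1 / cos (pi/(2*real n))) * sin (M*pi/n)) / 4"
  have up: "Pbar n (a, ?u - a) (b, ?u - b) \<le> v" unfolding v_def by (rule upper[OF n M ea eb])
  have SUM: "vl n a j + vl n b j = (2*cos (M*pi/n)*cos (real_of_int (2*j - M)*pi/n) + 2*C1)/(1+C1)" for j
  proof -
    have w1: "(2*real_of_int j*pi/real n + 2*real_of_int (j - M)*pi/real n)/2 = real_of_int (2*j - M)*pi/n"
      using rnp by (simp add: field_simps)
    have w2: "(2*real_of_int j*pi/real n - 2*real_of_int (j - M)*pi/real n)/2 = M*pi/n"
      using rnp by (simp add: field_simps)
    have "cos (2*real_of_int j*pi/real n) + cos (2*real_of_int (j - M)*pi/real n) = 2*cos (M*pi/n)*cos (real_of_int (2*j - M)*pi/n)"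
      unfolding cos_plus_cos w1 w2 by simp
    moreover have "vl n a j + vl n b j = ((cos (2*real_of_int j*pi/real n) + cos (2*real_of_int (j - M)*pi/real n)) + 2*C1)/(1+C1)"
      unfolding VA VB add_divide_distrib[symmetric] by (simp add: algebra_simps)
    ultimately show ?thesis by simp
  qed
  have DIF: "vl n a j - vl n b j = -2* sin (real_of_int (2*j - M)*pi/n)* sin (M*pi/n)/(1+C1)" for j
  proof -
    have w1: "(2*real_of_int j*pi/real n + 2*real_of_int (j - M)*pi/real n)/2 = real_of_int (2*j - M)*pi/n"
      using rnp by (simp add: field_simps)
    have w2: "(2*real_of_int (j - M)*pi/real n - 2*real_of_int j*pi/real n)/2 = - (M*pi/n)"
      using rnp by (simp add: field_simps)
    have "cos (2*real_of_int j*pi/real n) - cos (2*real_of_int (j - M)*pi/real n) = -2* sin (real_of_int (2*j - M)*pi/n)* sin (M*pi/n)"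
      unfolding cos_diff_cos w1 w2 sin_minus by simp
    moreover have "vl n a j - vl n b j = (cos (2*real_of_int j*pi/real n) - cos (2*real_of_int (j - M)*pi/real n))/(1+C1)"
      unfolding VA VB diff_divide_distrib[symmetric] by (simp add: algebra_simps)
    ultimately show ?thesis by simp
  qed
  obtain i1 i2 :: int where I: "cos (real_of_int (2*i1 - M)*pi/real n) - cos (real_of_int (2*i2 - M)*pi/real n) = 1 + C1"
    using cos_idx[OF n, of M] unfolding C1_def by blast
  obtain k1 k2 :: int where K: "sin (real_of_int (2*k2 - M)*pi/real n) - sin (real_of_int (2*k1 - M)*pi/real n) = 2 * c"
    using sin_idx[OF n, of M] unfolding c_def by blast
  have G1: "vl n a i1 + vl n b i1 \<le> gnorm n (a + b)" using vl_ge[OF np, of "a+b" i1] unfolding vl_add .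
  have G2: "1 + vl n a k1 - vl n b k1 \<le> gnorm n (a + (?u - b))" using vl_ge[OF np, of "a + (?u - b)" k1] unfolding vl_add vl_diff vl_unit by simp
  have G3: "1 - vl n a k2 + vl n b k2 \<le> gnorm n ((?u - a) + b)" using vl_ge[OF np, of "(?u - a) + b" k2] unfolding vl_add vl_diff vl_unit by simp
  have G4: "2 - vl n a i2 - vl n b i2 \<le> gnorm n ((?u - a) + (?u - b))" using vl_ge[OF np, of "(?u - a) + (?u - b)" i2] unfolding vl_add vl_diff vl_unit by simp
  have B1: "(vl n a i1 + vl n b i1) - (vl n a i2 + vl n b i2) = 2 * cos (M*pi/n)"
  proof -
    have "(vl n a i1 + vl n b i1) - (vl n a i2 + vl n b i2) = 2*cos (M*pi/n) * (cos (real_of_int (2*i1 - M)*pi/real n) - cos (real_of_int (2*i2 - M)*pi/real n)) / (1+C1)"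
      unfolding SUM diff_divide_distrib[symmetric] by (simp add: algebra_simps)
    also have "\<dots> = 2 * cos (M*pi/n)" unfolding I using C1p by simp
    finally show ?thesis .
  qed
  have B2: "(vl n a k1 - vl n b k1) - (vl n a k2 - vl n b k2) = 2 * sin (M*pi/n) / c"
  proof -
    have "(vl n a k1 - vl n b k1) - (vl n a k2 - vl n b k2) = 2* sin (M*pi/n) * (sin (real_of_int (2*k2 - M)*pi/real n) - sin (real_of_int (2*k1 - M)*pi/real n)) / (1+C1)"
      unfolding DIF diff_divide_distrib[symmetric] by (simp add: algebra_simps)
    also have "\<dots> = 2* sin (M*pi/n) * (2*c) / (2*c^2)" unfolding K C1c ..
    also have "\<dots> = 2 * sin (M*pi/n) / c" using c by (simp add: field_simps power2_eq_square)
    finally show ?thesis .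
  qed
  have P: "Pbar n (a, ?u - a) (b, ?u - b) = (1/8) * (gnorm n (a + b) + gnorm n (a + (?u - b)) + gnorm n ((?u - a) + b) + gnorm n ((?u - a) + (?u - b)))"
    unfolding Pbar_def by simp
  have low: "v \<le> Pbar n (a, ?u - a) (b, ?u - b)"
    unfolding P v_def using G1 G2 G3 G4 B1 B2 unfolding c_def by (simp add: field_simps)
  have "Pbar n (a, ?u - a) (b, ?u - b) = v" using up low by simp
  then have "v \<in> Pbar_values n" unfolding Pbar_values_def using d1 d2 by blast
  then show ?thesis unfolding v_def .
qed

lemma dich_form:
  assumes "dichotomic n P"
  shows "P = (fst P, unit_eff - fst P)" "is_effect n (fst P)"
proof -
  have "fst P + snd P = unit_eff" using assms unfolding dichotomic_def by blast
  then have "snd P = unit_eff - fst P" by (simp add: eq_diff_eq add.commute)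
  then show "P = (fst P, unit_eff - fst P)" by (metis prod.collapse)
  show "is_effect n (fst P)" using assms unfolding dichotomic_def by blast
qed

lemma both:
  fixes N :: nat and M :: int
  assumes n: "n = 2*N+1" "1 \<le> N" and M: "4*M - 2 \<le> int n" "int n \<le> 4*M + 1"
  shows "let v = (2 + cos (M*pi/n) + (1 / cos (pi/(2*real n))) * sin (M*pi/n)) / 4
         in v \<in> Pbar_values n \<and> (\<forall>y\<in>Pbar_values n. y \<le> v)"
  unfolding Let_def
proof (intro conjI ballI)
  show "(2 + cos (M*pi/n) + (1 / cos (pi/(2*real n))) * sin (M*pi/n)) / 4 \<in> Pbar_values n"
    by (rule achieve[OF n M])
next
  fix y assume "y \<in> Pbar_values n"
  then obtain P1 P2 where y: "y = Pbar n P1 P2" and d: "dichotomic n P1" "dichotomic n P2"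
    unfolding Pbar_values_def by blast
  have "Pbar n (fst P1, unit_eff - fst P1) (fst P2, unit_eff - fst P2) \<le> (2 + cos (M*pi/n) + (1 / cos (pi/(2*real n))) * sin (M*pi/n)) / 4"
    by (rule upper[OF n M dich_form(2)[OF d(1)] dich_form(2)[OF d(2)]])
  then show "y \<le> (2 + cos (M*pi/n) + (1 / cos (pi/(2*real n))) * sin (M*pi/n)) / 4"
    using y dich_form(1)[OF d(1)] dich_form(1)[OF d(2)] by metis
qed

theorem mainTheorem16:
  fixes n m :: nat
  assumes "odd n" and "n \<ge> 5" and "m \<ge> 1"
  shows "(n = 4*m + 1 \<longrightarrow>
            (let v = (2 + cos (real m * pi / real n)
                        + (1 / cos (pi / (2 * real n))) * sin (real m * pi / real n)) / 4
             in v \<in> Pbar_values n \<and> (\<forall>y\<in>Pbar_values n. y \<le> v)))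
       \<and> (n = 4*m + 3 \<longrightarrow>
            (let v = (2 + cos (real (m+1) * pi / real n)
                        + (1 / cos (pi / (2 * real n))) * sin (real (m+1) * pi / real n)) / 4
             in v \<in> Pbar_values n \<and> (\<forall>y\<in>Pbar_values n. y \<le> v)))"
proof (intro conjI impI)
  assume n: "n = 4*m + 1"
  have n2: "n = 2*(2*m)+1" "1 \<le> 2*m" using n assms by auto
  have M: "4*int m - 2 \<le> int n" "int n \<le> 4*int m + 1" using n by auto
  show "let v = (2 + cos (real m * pi / real n)
                        + (1 / cos (pi / (2 * real n))) * sin (real m * pi / real n)) / 4
             in v \<in> Pbar_values n \<and> (\<forall>y\<in>Pbar_values n. y \<le> v)"
    using both[OF n2 M] by simp
next
  assume n: "n = 4*m + 3"
  have n2: "n = 2*(2*m+1)+1" "1 \<le> 2*m+1" using n assms by auto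
  have M: "4*int (m+1) - 2 \<le> int n" "int n \<le> 4*int (m+1) + 1" using n by auto
  have e: "real_of_int (int (m+1)) = real (m+1)" by simp
  show "let v = (2 + cos (real (m+1) * pi / real n)
                        + (1 / cos (pi / (2 * real n))) * sin (real (m+1) * pi / real n)) / 4
             in v \<in> Pbar_values n \<and> (\<forall>y\<in>Pbar_values n. y \<le> v)"
    using both[OF n2 M] unfolding e .
qed

end
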